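(* For all types $A$, $B$, $C$: if $A \equiv C$, $C \equiv B$, $A \simeq C$ and $C \simeq B$, then $A \simeq B$.
   Context: Types and rows share one grammar: $A,B,C,\rho ::= X \mid \alpha \mid \star \mid \iota \mid A\to B \mid \forall X{:}K.\,A \mid [\rho] \mid \langle\rho\rangle \mid \cdot \mid \ell{:}A;\rho$, where $X$ ranges over type variables (bound by $\forall$), $\alpha$ over type names, $\star$ is the dynamic type (also serving as the dynamic row), $\iota$ over base types, $[\rho]$ and $\langle\rho\rangle$ are record and variant types, $\cdot$ is the empty row, $\ell$ ranges over labels, and $K\in\{\mathsf T,\mathsf R\}$ is a kind. Types are identified up to renaming of bound variables; $\mathit{ftv}(A)$ is the set of free type variables. Row matching $\rho \triangleright_\ell A,\rho'$ is defined by: $(\ell{:}A;\rho)\triangleright_\ell A,\rho$; if $\ell'\neq\ell$ and $\rho\triangleright_\ell A,\rho'$ then $(\ell'{:}B;\rho)\triangleright_\ell A,(\ell'{:}B;\rho')$; and $\star\triangleright_\ell \star,\star$. $\mathbf{QPoly}(A)$ holds iff $A$ is not of the form $\forall X{:}K.\,B$ and $\star$ occurs in $A$. Type equivalence $\equiv$ is the least equivalence relation that is a congruence for $\to$, $\forall X{:}K.\,-$, $[-]$, $\langle-\rangle$ and $\ell{:}-;-$, and contains $\ell{:}A;\ell'{:}B;\rho \equiv \ell'{:}B;\ell{:}A;\rho$ whenever $\ell\neq\ell'$. Consistency $\simeq$ is defined inductively: $A\simeq A$; $\star\simeq A$; $A\simeq\star$; $A_1\to A_2\simeq B_1\to B_2$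 if $A_1\simeq B_1$ and $A_2\simeq B_2$; $\forall X{:}K.A\simeq\forall X{:}K.B$ if $A\simeq B$; $\forall X{:}K.A\simeq B$ if $\mathbf{QPoly}(B)$, $X\notin\mathit{ftv}(B)$ and $A\simeq B$; $A\simeq\forall X{:}K.B$ if $\mathbf{QPoly}(A)$, $X\notin\mathit{ftv}(A)$ and $A\simeq B$; $[\rho_1]\simeq[\rho_2]$ and $\langle\rho_1\rangle\simeq\langle\rho_2\rangle$ if $\rho_1\simeq\rho_2$; $\ell{:}A;\rho_1\simeq B$ if $B\triangleright_\ell B',\rho_2$, $A\simeq B'$ and $\rho_1\simeq\rho_2$; $A\simeq \ell{:}B;\rho_2$ if $A\triangleright_\ell A',\rho_1$, $A'\simeq B$ and $\rho_1\simeq\rho_2$. *)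

theory Defs
  imports Main
begin

text \<open>Types and rows share one grammar. Bound type variables X are represented
by de Bruijn indices (so types are identified up to renaming of bound variables);
'n ranges over type names, 'b over base types, 'l over labels.\<close>

datatype kind = KT | KR

datatype ('n, 'b, 'l) ty =
    TVar nat
  | TName 'n
  | Dyn
  | Base 'b
  | Fun "('n, 'b, 'l) ty" "('n, 'b, 'l) ty"
  | All kind "('n, 'b, 'l) ty"
  | Record "('n, 'b, 'l) ty"
  | Variant "('n, 'b, 'l) ty"
  | REmpty
  | RCons 'l "('n, 'b, 'l) ty" "('n, 'b, 'l) ty"

fun lift :: "nat \<Rightarrow> ('n, 'b, 'l) ty \<Rightarrow> ('n, 'b, 'l) ty" where
  "lift k (TVar i) = (if i < k then TVar i else TVar (Suc i))"
| "lift k (TName a) = TName a"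
| "lift k Dyn = Dyn"
| "lift k (Base b) = Base b"
| "lift k (Fun A B) = Fun (lift k A) (lift k B)"
| "lift k (All K A) = All K (lift (Suc k) A)"
| "lift k (Record r) = Record (lift k r)"
| "lift k (Variant r) = Variant (lift k r)"
| "lift k REmpty = REmpty"
| "lift k (RCons l A r) = RCons l (lift k A) (lift k r)"

fun ftv_at :: "nat \<Rightarrow> ('n, 'b, 'l) ty \<Rightarrow> nat set" where
  "ftv_at k (TVar i) = (if i < k then {} else {i - k})"
| "ftv_at k (TName a) = {}"
| "ftv_at k Dyn = {}"
| "ftv_at k (Base b) = {}"
| "ftv_at k (Fun A B) = ftv_at k A \<union> ftv_at k B"
| "ftv_at k (All K A) = ftv_at (Suc k) A"
| "ftv_at k (Record r) = ftv_at k r"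
| "ftv_at k (Variant r) = ftv_at k r"
| "ftv_at k REmpty = {}"
| "ftv_at k (RCons l A r) = ftv_at k A \<union> ftv_at k r"

abbreviation ftv :: "('n, 'b, 'l) ty \<Rightarrow> nat set" where
  "ftv \<equiv> ftv_at 0"

fun has_dyn :: "('n, 'b, 'l) ty \<Rightarrow> bool" where
  "has_dyn Dyn = True"
| "has_dyn (Fun A B) = (has_dyn A \<or> has_dyn B)"
| "has_dyn (All K A) = has_dyn A"
| "has_dyn (Record r) = has_dyn r"
| "has_dyn (Variant r) = has_dyn r"
| "has_dyn (RCons l A r) = (has_dyn A \<or> has_dyn r)"
| "has_dyn _ = False"

definition QPoly :: "('n, 'b, 'l) ty \<Rightarrow> bool" where
  "QPoly A \<longleftrightarrow> (\<nexists>K B. A = All K B) \<and> has_dyn A"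

inductive rmatch :: "('n, 'b, 'l) ty \<Rightarrow> 'l \<Rightarrow> ('n, 'b, 'l) ty \<Rightarrow> ('n, 'b, 'l) ty \<Rightarrow> bool" where
  rm_head: "rmatch (RCons l A r) l A r"
| rm_skip: "l' \<noteq> l \<Longrightarrow> rmatch r l A r' \<Longrightarrow> rmatch (RCons l' B r) l A (RCons l' B r')"
| rm_dyn: "rmatch Dyn l Dyn Dyn"

inductive tyeq :: "('n, 'b, 'l) ty \<Rightarrow> ('n, 'b, 'l) ty \<Rightarrow> bool" (infix "\<equiv>\<^sub>t" 50) where
  eq_refl: "A \<equiv>\<^sub>t A"
| eq_sym: "A \<equiv>\<^sub>t B \<Longrightarrow> B \<equiv>\<^sub>t A"
| eq_trans: "A \<equiv>\<^sub>t B \<Longrightarrow> B \<equiv>\<^sub>t C \<Longrightarrow> A \<equiv>\<^sub>t C"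
| eq_fun: "A1 \<equiv>\<^sub>t B1 \<Longrightarrow> A2 \<equiv>\<^sub>t B2 \<Longrightarrow> Fun A1 A2 \<equiv>\<^sub>t Fun B1 B2"
| eq_all: "A \<equiv>\<^sub>t B \<Longrightarrow> All K A \<equiv>\<^sub>t All K B"
| eq_rec: "A \<equiv>\<^sub>t B \<Longrightarrow> Record A \<equiv>\<^sub>t Record B"
| eq_var: "A \<equiv>\<^sub>t B \<Longrightarrow> Variant A \<equiv>\<^sub>t Variant B"
| eq_rcons: "A \<equiv>\<^sub>t B \<Longrightarrow> r1 \<equiv>\<^sub>t r2 \<Longrightarrow> RCons l A r1 \<equiv>\<^sub>t RCons l B r2"
| eq_swap: "l \<noteq> l' \<Longrightarrow> RCons l A (RCons l' B r) \<equiv>\<^sub>t RCons l' B (RCons l A r)"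

text \<open>In the quasi-polymorphic rules, the side condition
\<open>X \<notin> ftv(B)\<close> together with \<open>A \<simeq> B\<close> (with X free in A) is rendered in
de Bruijn form by comparing the body A with B weakened by one binder.\<close>
inductive consistent :: "('n, 'b, 'l) ty \<Rightarrow> ('n, 'b, 'l) ty \<Rightarrow> bool" (infix "\<simeq>" 50) where
  c_refl: "A \<simeq> A"
| c_dynL: "Dyn \<simeq> A"
| c_dynR: "A \<simeq> Dyn"
| c_fun: "A1 \<simeq> B1 \<Longrightarrow> A2 \<simeq> B2 \<Longrightarrow> Fun A1 A2 \<simeq> Fun B1 B2"
| c_all: "A \<simeq> B \<Longrightarrow> All K A \<simeq> All K B"
| c_allL: "QPoly B \<Longrightarrow> A \<simeq> lift 0 B \<Longrightarrow> All K A \<simeq> B"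
| c_allR: "QPoly A \<Longrightarrow> lift 0 A \<simeq> B \<Longrightarrow> A \<simeq> All K B"
| c_rec: "r1 \<simeq> r2 \<Longrightarrow> Record r1 \<simeq> Record r2"
| c_var: "r1 \<simeq> r2 \<Longrightarrow> Variant r1 \<simeq> Variant r2"
| c_rowL: "rmatch B l B' r2 \<Longrightarrow> A \<simeq> B' \<Longrightarrow> r1 \<simeq> r2 \<Longrightarrow> RCons l A r1 \<simeq> B"
| c_rowR: "rmatch A l A' r1 \<Longrightarrow> A' \<simeq> B \<Longrightarrow> r1 \<simeq> r2 \<Longrightarrow> A \<simeq> RCons l B r2"

end

theory Submission
  imports Defs
begin

lemma rmatch_RCons_inv:
  "rmatch (RCons l0 A r) l X Y \<Longrightarrow>
   (l0 = l \<and> X = A \<and> Y = r) \<or> (l0 \<noteq> l \<and> (\<exists>Y'. rmatch r l X Y' \<and> Y = RCons l0 A Y'))"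
  by (erule rmatch.cases) auto

lemma rmatch_nonrow:
  "\<not> rmatch (Fun a b) l X Y" "\<not> rmatch (All K a) l X Y"
  "\<not> rmatch (Record a) l X Y" "\<not> rmatch (Variant a) l X Y"
  by (auto elim: rmatch.cases)

lemma match_eq_aux:
  "B \<equiv>\<^sub>t C \<Longrightarrow>
   (\<forall>l B' r2. rmatch B l B' r2 \<longrightarrow> (\<exists>C' r3. rmatch C l C' r3 \<and> B' \<equiv>\<^sub>t C' \<and> r2 \<equiv>\<^sub>t r3)) \<and>
   (\<forall>l C' r3. rmatch C l C' r3 \<longrightarrow> (\<exists>B' r2. rmatch B l B' r2 \<and> B' \<equiv>\<^sub>t C' \<and> r2 \<equiv>\<^sub>t r3))"
proof (induction rule: tyeq.induct)
  case (eq_refl A)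
  then show ?case by (blast intro: tyeq.eq_refl)
next
  case (eq_sym A B)
  then show ?case by (blast intro: tyeq.eq_sym)
next
  case (eq_trans A B C)
  show ?case
  proof (intro conjI allI impI)
    fix l X Y assume "rmatch A l X Y"
    then obtain X1 Y1 where "rmatch B l X1 Y1" "X \<equiv>\<^sub>t X1" "Y \<equiv>\<^sub>t Y1" using eq_trans.IH(1) by blast
    moreover then obtain X2 Y2 where "rmatch C l X2 Y2" "X1 \<equiv>\<^sub>t X2" "Y1 \<equiv>\<^sub>t Y2" using eq_trans.IH(2) by blast
    ultimately show "\<exists>C' r3. rmatch C l C' r3 \<and> X \<equiv>\<^sub>t C' \<and> Y \<equiv>\<^sub>t r3"
      using tyeq.eq_trans by blast
  next
    fix l X Y assume "rmatch C l X Y"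
    then obtain X1 Y1 where "rmatch B l X1 Y1" "X1 \<equiv>\<^sub>t X" "Y1 \<equiv>\<^sub>t Y" using eq_trans.IH(2) by blast
    moreover then obtain X2 Y2 where "rmatch A l X2 Y2" "X2 \<equiv>\<^sub>t X1" "Y2 \<equiv>\<^sub>t Y1" using eq_trans.IH(1) by blast
    ultimately show "\<exists>B' r2. rmatch A l B' r2 \<and> B' \<equiv>\<^sub>t X \<and> r2 \<equiv>\<^sub>t Y"
      using tyeq.eq_trans by blast
  qed
next
  case (eq_fun A1 B1 A2 B2)
  show ?case by (simp add: rmatch_nonrow)
next
  case (eq_all A B K)
  show ?case by (simp add: rmatch_nonrow)
next
  case (eq_rec A B)
  show ?case by (simp add: rmatch_nonrow)
next
  case (eq_var A B)
  show ?case by (simp add: rmatch_nonrow)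
next
  case (eq_rcons A B r1 r2 l0)
  show ?case
  proof (intro conjI allI impI)
    fix l X Y assume m: "rmatch (RCons l0 A r1) l X Y"
    from rmatch_RCons_inv[OF m] show "\<exists>C' r3. rmatch (RCons l0 B r2) l C' r3 \<and> X \<equiv>\<^sub>t C' \<and> Y \<equiv>\<^sub>t r3"
    proof
      assume "l0 = l \<and> X = A \<and> Y = r1"
      then show ?thesis using eq_rcons by (blast intro: rm_head)
    next
      assume "l0 \<noteq> l \<and> (\<exists>Y'. rmatch r1 l X Y' \<and> Y = RCons l0 A Y')"
      then obtain Y' where h: "l0 \<noteq> l" "rmatch r1 l X Y'" "Y = RCons l0 A Y'" by blast
      with eq_rcons.IH(2) obtain C' r3 where "rmatch r2 l C' r3" "X \<equiv>\<^sub>t C'" "Y' \<equiv>\<^sub>t r3" by blast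
      then show ?thesis using h eq_rcons by (blast intro: rm_skip tyeq.eq_rcons)
    qed
  next
    fix l X Y assume m: "rmatch (RCons l0 B r2) l X Y"
    from rmatch_RCons_inv[OF m] show "\<exists>B' r3. rmatch (RCons l0 A r1) l B' r3 \<and> B' \<equiv>\<^sub>t X \<and> r3 \<equiv>\<^sub>t Y"
    proof
      assume "l0 = l \<and> X = B \<and> Y = r2"
      then show ?thesis using eq_rcons by (blast intro: rm_head)
    next
      assume "l0 \<noteq> l \<and> (\<exists>Y'. rmatch r2 l X Y' \<and> Y = RCons l0 B Y')"
      then obtain Y' where h: "l0 \<noteq> l" "rmatch r2 l X Y'" "Y = RCons l0 B Y'" by blast
      with eq_rcons.IH(2) obtain C' r3 where "rmatch r1 l C' r3" "C' \<equiv>\<^sub>t X" "r3 \<equiv>\<^sub>t Y'" by blast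
      then show ?thesis using h eq_rcons by (blast intro: rm_skip tyeq.eq_rcons)
    qed
  qed
next
  case (eq_swap l1 l2 A B r)
  show ?case
  proof (intro conjI allI impI)
    fix l X Y assume m: "rmatch (RCons l1 A (RCons l2 B r)) l X Y"
    show "\<exists>C' r3. rmatch (RCons l2 B (RCons l1 A r)) l C' r3 \<and> X \<equiv>\<^sub>t C' \<and> Y \<equiv>\<^sub>t r3"
    proof (cases "l = l1")
      case True
      then have "X = A" "Y = RCons l2 B r" using rmatch_RCons_inv[OF m] by auto
      moreover have "rmatch (RCons l2 B (RCons l1 A r)) l A (RCons l2 B r)"
        using True eq_swap by (auto intro: rm_head rm_skip)
      ultimately show ?thesis by (blast intro: eq_refl)
    next
      case F1: False
      show ?thesis
      proof (cases "l = l2")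
        case True
        then have "X = B" "Y = RCons l1 A r" using rmatch_RCons_inv[OF m] F1
          by (auto dest: rmatch_RCons_inv)
        moreover have "rmatch (RCons l2 B (RCons l1 A r)) l B (RCons l1 A r)"
          using True by (auto intro: rm_head)
        ultimately show ?thesis by (blast intro: eq_refl)
      next
        case False
        then obtain Y' where "rmatch r l X Y'" "Y = RCons l1 A (RCons l2 B Y')"
          using rmatch_RCons_inv[OF m] F1 by (blast dest: rmatch_RCons_inv)
        moreover have "rmatch (RCons l2 B (RCons l1 A r)) l X (RCons l2 B (RCons l1 A Y'))"
          using False F1 calculation by (auto intro: rm_skip)
        ultimately show ?thesis using eq_swap tyeq.eq_swap[of l1 l2 A B Y'] tyeq.eq_swap[of l1 l2 A B X] tyeq.eq_sym tyeq.eq_refl by blast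
      qed
    qed
  next
    fix l X Y assume m: "rmatch (RCons l2 B (RCons l1 A r)) l X Y"
    show "\<exists>B' r3. rmatch (RCons l1 A (RCons l2 B r)) l B' r3 \<and> B' \<equiv>\<^sub>t X \<and> r3 \<equiv>\<^sub>t Y"
    proof (cases "l = l2")
      case True
      then have "X = B" "Y = RCons l1 A r" using rmatch_RCons_inv[OF m] by auto
      moreover have "rmatch (RCons l1 A (RCons l2 B r)) l B (RCons l1 A r)"
        using True eq_swap by (auto intro: rm_head rm_skip)
      ultimately show ?thesis by (blast intro: eq_refl)
    next
      case F1: False
      show ?thesis
      proof (cases "l = l1")
        case True
        then have "X = A" "Y = RCons l2 B r" using rmatch_RCons_inv[OF m] F1
          by (auto dest: rmatch_RCons_inv)
        moreover have "rmatch (RCons l1 A (RCons l2 B r)) l A (RCons l2 B r)"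
          using True by (auto intro: rm_head)
        ultimately show ?thesis by (blast intro: eq_refl)
      next
        case False
        then obtain Y' where "rmatch r l X Y'" "Y = RCons l2 B (RCons l1 A Y')"
          using rmatch_RCons_inv[OF m] F1 by (blast dest: rmatch_RCons_inv)
        moreover have "rmatch (RCons l1 A (RCons l2 B r)) l X (RCons l1 A (RCons l2 B Y'))"
          using False F1 calculation by (auto intro: rm_skip)
        ultimately show ?thesis using eq_swap tyeq.eq_swap[of l1 l2 A B Y'] tyeq.eq_sym tyeq.eq_refl by blast
      qed
    qed
  qed
qed

lemma rcons_eq_inv:
  assumes "RCons l A r \<equiv>\<^sub>t B"
  shows "\<exists>B' r2. rmatch B l B' r2 \<and> A \<equiv>\<^sub>t B' \<and> r \<equiv>\<^sub>t r2"
  using conjunct1[OF match_eq_aux[OF assms], rule_format, OF rm_head] by simp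

fun atom :: "('n, 'b, 'l) ty \<Rightarrow> bool" where
  "atom (TVar i) = True"
| "atom (TName a) = True"
| "atom Dyn = True"
| "atom (Base b) = True"
| "atom REmpty = True"
| "atom _ = False"

lemma atom_eq_aux: "A \<equiv>\<^sub>t B \<Longrightarrow> (atom A \<longrightarrow> B = A) \<and> (atom B \<longrightarrow> A = B)"
proof (induction rule: tyeq.induct)
  case (eq_trans A B C)
  then show ?case by metis
qed (blast | simp only: atom.simps simp_thms)+

lemma fun_eq_aux: "A \<equiv>\<^sub>t B \<Longrightarrow>
  (\<forall>x y. A = Fun x y \<longrightarrow> (\<exists>u v. B = Fun u v \<and> x \<equiv>\<^sub>t u \<and> y \<equiv>\<^sub>t v)) \<and>
  (\<forall>x y. B = Fun x y \<longrightarrow> (\<exists>u v. A = Fun u v \<and> u \<equiv>\<^sub>t x \<and> v \<equiv>\<^sub>t y))"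
proof (induction rule: tyeq.induct)
  case (eq_trans A B C)
  show ?case
  proof (intro conjI allI impI)
    fix x y assume "A = Fun x y"
    then obtain u v where "B = Fun u v" "x \<equiv>\<^sub>t u" "y \<equiv>\<^sub>t v" using eq_trans.IH(1) by blast
    moreover then obtain u' v' where "C = Fun u' v'" "u \<equiv>\<^sub>t u'" "v \<equiv>\<^sub>t v'" using eq_trans.IH(2) by blast
    ultimately show "\<exists>u v. C = Fun u v \<and> x \<equiv>\<^sub>t u \<and> y \<equiv>\<^sub>t v"
      using tyeq.eq_trans by blast
  next
    fix x y assume "C = Fun x y"
    then obtain u v where "B = Fun u v" "u \<equiv>\<^sub>t x" "v \<equiv>\<^sub>t y" using eq_trans.IH(2) by blast
    moreover then obtain u' v' where "A = Fun u' v'" "u' \<equiv>\<^sub>t u" "v' \<equiv>\<^sub>t v" using eq_trans.IH(1) by blast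
    ultimately show "\<exists>u v. A = Fun u v \<and> u \<equiv>\<^sub>t x \<and> v \<equiv>\<^sub>t y"
      using tyeq.eq_trans by blast
  qed
qed (simp_all, (blast intro: tyeq.eq_sym tyeq.eq_refl)+)

lemma all_eq_aux: "A \<equiv>\<^sub>t B \<Longrightarrow>
  (\<forall>K x. A = All K x \<longrightarrow> (\<exists>u. B = All K u \<and> x \<equiv>\<^sub>t u)) \<and>
  (\<forall>K x. B = All K x \<longrightarrow> (\<exists>u. A = All K u \<and> u \<equiv>\<^sub>t x))"
proof (induction rule: tyeq.induct)
  case (eq_trans A B C)
  show ?case
  proof (intro conjI allI impI)
    fix K x assume "A = All K x"
    then obtain u where "B = All K u" "x \<equiv>\<^sub>t u" using eq_trans.IH(1) by blast
    moreover then obtain u' where "C = All K u'" "u \<equiv>\<^sub>t u'" using eq_trans.IH(2) by blast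
    ultimately show "\<exists>u. C = All K u \<and> x \<equiv>\<^sub>t u"
      using tyeq.eq_trans by blast
  next
    fix K x assume "C = All K x"
    then obtain u where "B = All K u" "u \<equiv>\<^sub>t x" using eq_trans.IH(2) by blast
    moreover then obtain u' where "A = All K u'" "u' \<equiv>\<^sub>t u" using eq_trans.IH(1) by blast
    ultimately show "\<exists>u. A = All K u \<and> u \<equiv>\<^sub>t x"
      using tyeq.eq_trans by blast
  qed
qed (simp_all, (blast intro: tyeq.eq_sym tyeq.eq_refl)+)

lemma rec_eq_aux: "A \<equiv>\<^sub>t B \<Longrightarrow>
  (\<forall>x. A = Record x \<longrightarrow> (\<exists>u. B = Record u \<and> x \<equiv>\<^sub>t u)) \<and>
  (\<forall>x. B = Record x \<longrightarrow> (\<exists>u. A = Record u \<and> u \<equiv>\<^sub>t x))"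
proof (induction rule: tyeq.induct)
  case (eq_trans A B C)
  show ?case
  proof (intro conjI allI impI)
    fix x assume "A = Record x"
    then obtain u where "B = Record u" "x \<equiv>\<^sub>t u" using eq_trans.IH(1) by blast
    moreover then obtain u' where "C = Record u'" "u \<equiv>\<^sub>t u'" using eq_trans.IH(2) by blast
    ultimately show "\<exists>u. C = Record u \<and> x \<equiv>\<^sub>t u"
      using tyeq.eq_trans by blast
  next
    fix x assume "C = Record x"
    then obtain u where "B = Record u" "u \<equiv>\<^sub>t x" using eq_trans.IH(2) by blast
    moreover then obtain u' where "A = Record u'" "u' \<equiv>\<^sub>t u" using eq_trans.IH(1) by blast
    ultimately show "\<exists>u. A = Record u \<and> u \<equiv>\<^sub>t x"
      using tyeq.eq_trans by blast
  qed
qed (simp_all, (blast intro: tyeq.eq_sym tyeq.eq_refl)+)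

lemma var_eq_aux: "A \<equiv>\<^sub>t B \<Longrightarrow>
  (\<forall>x. A = Variant x \<longrightarrow> (\<exists>u. B = Variant u \<and> x \<equiv>\<^sub>t u)) \<and>
  (\<forall>x. B = Variant x \<longrightarrow> (\<exists>u. A = Variant u \<and> u \<equiv>\<^sub>t x))"
proof (induction rule: tyeq.induct)
  case (eq_trans A B C)
  show ?case
  proof (intro conjI allI impI)
    fix x assume "A = Variant x"
    then obtain u where "B = Variant u" "x \<equiv>\<^sub>t u" using eq_trans.IH(1) by blast
    moreover then obtain u' where "C = Variant u'" "u \<equiv>\<^sub>t u'" using eq_trans.IH(2) by blast
    ultimately show "\<exists>u. C = Variant u \<and> x \<equiv>\<^sub>t u"
      using tyeq.eq_trans by blast
  next
    fix x assume "C = Variant x"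
    then obtain u where "B = Variant u" "u \<equiv>\<^sub>t x" using eq_trans.IH(2) by blast
    moreover then obtain u' where "A = Variant u'" "u' \<equiv>\<^sub>t u" using eq_trans.IH(1) by blast
    ultimately show "\<exists>u. A = Variant u \<and> u \<equiv>\<^sub>t x"
      using tyeq.eq_trans by blast
  qed
qed (simp_all, (blast intro: tyeq.eq_sym tyeq.eq_refl)+)

lemma atom_eq: "A \<equiv>\<^sub>t B \<Longrightarrow> atom A \<Longrightarrow> B = A"
  using atom_eq_aux by blast

lemma eq_consistent: "A \<equiv>\<^sub>t B \<Longrightarrow> A \<simeq> B"
proof (induction A arbitrary: B)
  case (Fun A1 A2)
  obtain u v where "B = Fun u v" "A1 \<equiv>\<^sub>t u" "A2 \<equiv>\<^sub>t v"
    using fun_eq_aux[OF Fun.prems] by blast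
  then show ?case using Fun.IH c_fun by metis
next
  case (All K A)
  obtain u where "B = All K u" "A \<equiv>\<^sub>t u"
    using all_eq_aux[OF All.prems] by blast
  then show ?case using All.IH c_all by metis
next
  case (Record A)
  obtain u where "B = Record u" "A \<equiv>\<^sub>t u"
    using rec_eq_aux[OF Record.prems] by blast
  then show ?case using Record.IH c_rec by metis
next
  case (Variant A)
  obtain u where "B = Variant u" "A \<equiv>\<^sub>t u"
    using var_eq_aux[OF Variant.prems] by blast
  then show ?case using Variant.IH c_var by metis
next
  case (RCons l A r)
  obtain B' r2 where "rmatch B l B' r2" "A \<equiv>\<^sub>t B'" "r \<equiv>\<^sub>t r2"
    using rcons_eq_inv[OF RCons.prems] by blast
  then show ?case using RCons.IH c_rowL by metis
next
  case (TVar x)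
  then show ?case using atom_eq[OF TVar.prems] c_refl by simp
next
  case (TName x)
  then show ?case using atom_eq[OF TName.prems] c_refl by simp
next
  case Dyn
  then show ?case using atom_eq[OF Dyn.prems] c_refl by simp
next
  case (Base x)
  then show ?case using atom_eq[OF Base.prems] c_refl by simp
next
  case REmpty
  then show ?case using atom_eq[OF REmpty.prems] c_refl by simp
qed

theorem mainTheorem6:
  fixes A B C :: "('n, 'b, 'l) ty"
  assumes "A \<equiv>\<^sub>t C" and "C \<equiv>\<^sub>t B" and "A \<simeq> C" and "C \<simeq> B"
  shows "A \<simeq> B"
  using eq_consistent[OF eq_trans[OF assms(1,2)]] .

end
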